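(* Let $\mathbf{\Pi}=\langle\mathit{PF},\Pi\rangle$ be a multi-valued probabilistic program such that every probability $p_i$ in the declaration of every probabilistic constant is positive. If $\mathrm{SM}''[\mathbf{\Pi}]$ is not empty, then for every interpretation $I$, $P''_{\mathbf{\Pi}}(I)=P_{T(\mathbf{\Pi})}(I)$.
   Context: Stable model semantics: a formula is negative if every atom occurrence is in the scope of negation; a rule has the form $A\leftarrow B\wedge N$ ($A$ a possibly empty disjunction of atoms, $B$ a conjunction of atoms, $N$ a negative formula); the reduct $\Pi^I$ of a ground program consists of $A\leftarrow B$ for rules with $I\models N$, and $I$ (a set of atoms) is a stable model if it is a minimal model of $\Pi^I$. An $\mathrm{LP}^{\mathrm{MLN}}$ program is a finite set of weighted rules $w:R$ ($w$ real or the symbol $\alpha$); $\Pi_I=\{w:R\mid I\models R\}$; $\mathrm{SM}[\Pi]=\{I\mid I$ stable model of the unweighted $\Pi_I\}$; $W_\Pi(I)=\exp(\sum_{w:R\in\Pi_I}w)$ if $I\in\mathrm{SM}[\Pi]$, else $0$; $P_\Pi(I)=\lim_{\alpha\to\infty}W_\Pi(I)/\sum_{J\in\mathrm{SM}[\Pi]}W_\Pi(J)$. Multi-valued signature: a finite set of constants $c$, each with a finite domain $\mathrm{Dom}(c)$; the propositional atoms are $c=v$ for $v\in\mathrm{Dom}(c)$ ("=" is part of the symbol). Constants are divided into probabilistic and regular. A multi-valued probabilistic program $\mathbf{\Pi}=\langle\mathit{PF},\Pi\rangle$: $\mathit{PF}$ contains, for each probabilistic constant $c$, one declaration $p_1:c=v_1\mid\dots\mid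 p_n:c=v_n$ with $\{v_1,\dots,v_n\}=\mathrm{Dom}(c)$ distinct, $0\le p_i\le1$, $\sum_i p_i=1$; write $M_{\mathbf{\Pi}}(c=v_i)=p_i$. $\Pi$ is a set of rules whose heads contain no atom of a probabilistic constant. $T(\mathbf{\Pi})$ is the $\mathrm{LP}^{\mathrm{MLN}}$ program containing: for each declaration and each $i$, $\ln(p_i):c=v_i$ if $0<p_i<1$, $\alpha:c=v_i$ if $p_i=1$, $\alpha:\bot\leftarrow c=v_i$ if $p_i=0$; $\alpha:R$ for each $R\in\Pi$; $\alpha:\bot\leftarrow c=v_1\wedge c=v_2$ for every constant $c$ and distinct $v_1,v_2\in\mathrm{Dom}(c)$; and $\alpha:\bot\leftarrow\neg\bigvee_{v\in\mathrm{Dom}(c)}c=v$ for every probabilistic constant $c$. An interpretation is consistent if it satisfies the last two kinds of constraints. For consistent $I$, $\mathit{TC}(I)=\{c=v\in I\mid c$ probabilistic$\}$. $\mathrm{SM}''[\mathbf{\Pi}]$ is the set of consistent $I$ that are stable models of $\Pi\cup\mathit{TC}(I)$. $W''_{\mathbf{\Pi}}(I)=\prod_{c=v\in\mathit{TC}(I)}M_{\mathbf{\Pi}}(c=v)$ if $I\in\mathrm{SM}''[\mathbf{\Pi}]$, else $0$; $P''_{\mathbf{\Pi}}(I)=W''_{\mathbf{\Pi}}(I)/\sum_{J\in\mathrm{SM}''[\mathbf{\Pi}]}W''_{\mathbf{\Pi}}(J)$. *)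

theory Defs
  imports Complex_Main
begin

datatype 'a formula =
    FAtom 'a | FBot | FTop | FNot "'a formula"
  | FAnd "'a formula" "'a formula" | FOr "'a formula" "'a formula"
  | FImp "'a formula" "'a formula"

fun fsat :: "'a set \<Rightarrow> 'a formula \<Rightarrow> bool" where
  "fsat I (FAtom a) = (a \<in> I)"
| "fsat I FBot = False"
| "fsat I FTop = True"
| "fsat I (FNot f) = (\<not> fsat I f)"
| "fsat I (FAnd f g) = (fsat I f \<and> fsat I g)"
| "fsat I (FOr f g) = (fsat I f \<or> fsat I g)"
| "fsat I (FImp f g) = (fsat I f \<longrightarrow> fsat I g)"

fun fatoms :: "'a formula \<Rightarrow> 'a set" where
  "fatoms (FAtom a) = {a}"
| "fatoms FBot = {}"
| "fatoms FTop = {}"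
| "fatoms (FNot f) = fatoms f"
| "fatoms (FAnd f g) = fatoms f \<union> fatoms g"
| "fatoms (FOr f g) = fatoms f \<union> fatoms g"
| "fatoms (FImp f g) = fatoms f \<union> fatoms g"

fun negative :: "'a formula \<Rightarrow> bool" where
  "negative (FAtom a) = False"
| "negative FBot = True"
| "negative FTop = True"
| "negative (FNot f) = True"
| "negative (FAnd f g) = (negative f \<and> negative g)"
| "negative (FOr f g) = (negative f \<and> negative g)"
| "negative (FImp f g) = (negative f \<and> negative g)"

definition disj_list :: "'a formula list \<Rightarrow> 'a formula" where
  "disj_list fs = foldr FOr fs FBot"

text \<open>Rule  A <- B /\ N : head A (disjunction of atoms, empty = bottom),
  positive body B (conjunction of atoms), negative formula N.\<close>
datatype 'a rule = Rule (head: "'a set") (pos: "'a set") (neg: "'a formula")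

definition rule_sat :: "'a set \<Rightarrow> 'a rule \<Rightarrow> bool" where
  "rule_sat I R \<longleftrightarrow> (pos R \<subseteq> I \<and> fsat I (neg R) \<longrightarrow> head R \<inter> I \<noteq> {})"

definition rule_atoms :: "'a rule \<Rightarrow> 'a set" where
  "rule_atoms R = head R \<union> pos R \<union> fatoms (neg R)"

definition well_formed_rule :: "'a rule \<Rightarrow> bool" where
  "well_formed_rule R \<longleftrightarrow> finite (head R) \<and> finite (pos R) \<and> negative (neg R)"

definition reduct :: "'a rule set \<Rightarrow> 'a set \<Rightarrow> ('a set \<times> 'a set) set" where
  "reduct P I = {(head R, pos R) | R. R \<in> P \<and> fsat I (neg R)}"

definition pos_model :: "'a set \<Rightarrow> ('a set \<times> 'a set) set \<Rightarrow> bool" where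
  "pos_model J Q \<longleftrightarrow> (\<forall>(A, B) \<in> Q. B \<subseteq> J \<longrightarrow> A \<inter> J \<noteq> {})"

definition stable_model :: "'a set \<Rightarrow> 'a rule set \<Rightarrow> bool" where
  "stable_model I P \<longleftrightarrow> pos_model I (reduct P I) \<and>
     (\<forall>J. J \<subset> I \<longrightarrow> \<not> pos_model J (reduct P I))"

datatype weight = W real | Alpha

fun wval :: "real \<Rightarrow> weight \<Rightarrow> real" where
  "wval \<alpha> (W r) = r"
| "wval \<alpha> Alpha = \<alpha>"

definition sat_part :: "(weight \<times> 'a rule) set \<Rightarrow> 'a set \<Rightarrow> (weight \<times> 'a rule) set" where
  "sat_part \<Pi> I = {(w, R) \<in> \<Pi>. rule_sat I R}"

definition lpmln_SM :: "'a set \<Rightarrow> (weight \<times> 'a rule) set \<Rightarrow> 'a set set" where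
  "lpmln_SM At \<Pi> = {I. I \<subseteq> At \<and> stable_model I (snd ` sat_part \<Pi> I)}"

definition lpmln_W :: "'a set \<Rightarrow> (weight \<times> 'a rule) set \<Rightarrow> real \<Rightarrow> 'a set \<Rightarrow> real" where
  "lpmln_W At \<Pi> \<alpha> I =
     (if I \<in> lpmln_SM At \<Pi> then exp (\<Sum>(w, R) \<in> sat_part \<Pi> I. wval \<alpha> w) else 0)"

definition lpmln_ratio :: "'a set \<Rightarrow> (weight \<times> 'a rule) set \<Rightarrow> real \<Rightarrow> 'a set \<Rightarrow> real" where
  "lpmln_ratio At \<Pi> \<alpha> I = lpmln_W At \<Pi> \<alpha> I / (\<Sum>J \<in> lpmln_SM At \<Pi>. lpmln_W At \<Pi> \<alpha> J)"

definition lpmln_prob :: "'a set \<Rightarrow> (weight \<times> 'a rule) set \<Rightarrow> 'a set \<Rightarrow> real" where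
  "lpmln_prob At \<Pi> I = Lim at_top (\<lambda>\<alpha>. lpmln_ratio At \<Pi> \<alpha> I)"

text \<open>Signature: constants C (finite), domains Dom c; atoms are pairs (c,v) standing
  for c=v. PC \<subseteq> C are the probabilistic constants; M c v is the probability p_i
  attached to c=v in the declaration of c; Pi is the set of rules.\<close>

definition sig_atoms :: "'c set \<Rightarrow> ('c \<Rightarrow> 'v set) \<Rightarrow> ('c \<times> 'v) set" where
  "sig_atoms C Dom = {(c, v). c \<in> C \<and> v \<in> Dom c}"

definition mv_program ::
  "'c set \<Rightarrow> 'c set \<Rightarrow> ('c \<Rightarrow> 'v set) \<Rightarrow> ('c \<Rightarrow> 'v \<Rightarrow> real) \<Rightarrow> ('c \<times> 'v) rule set \<Rightarrow> bool" where
  "mv_program C PC Dom M \<Pi> \<longleftrightarrow>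
     finite C \<and> PC \<subseteq> C \<and> (\<forall>c \<in> C. finite (Dom c)) \<and>
     (\<forall>c \<in> PC. (\<forall>v \<in> Dom c. 0 \<le> M c v \<and> M c v \<le> 1) \<and> (\<Sum>v \<in> Dom c. M c v) = 1) \<and>
     finite \<Pi> \<and>
     (\<forall>R \<in> \<Pi>. well_formed_rule R \<and> rule_atoms R \<subseteq> sig_atoms C Dom \<and>
                (\<forall>(c, v) \<in> head R. c \<notin> PC))"

definition fact :: "'a \<Rightarrow> 'a rule" where
  "fact a = Rule {a} {} FTop"

definition dom_list :: "('c \<Rightarrow> 'v set) \<Rightarrow> 'c \<Rightarrow> 'v list" where
  "dom_list Dom c = (SOME xs. distinct xs \<and> set xs = Dom c)"

definition T_prog ::
  "'c set \<Rightarrow> 'c set \<Rightarrow> ('c \<Rightarrow> 'v set) \<Rightarrow> ('c \<Rightarrow> 'v \<Rightarrow> real) \<Rightarrow> ('c \<times> 'v) rule set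
   \<Rightarrow> (weight \<times> ('c \<times> 'v) rule) set" where
  "T_prog C PC Dom M \<Pi> =
     {(W (ln (M c v)), fact (c, v)) | c v. c \<in> PC \<and> v \<in> Dom c \<and> 0 < M c v \<and> M c v < 1}
   \<union> {(Alpha, fact (c, v)) | c v. c \<in> PC \<and> v \<in> Dom c \<and> M c v = 1}
   \<union> {(Alpha, Rule {} {(c, v)} FTop) | c v. c \<in> PC \<and> v \<in> Dom c \<and> M c v = 0}
   \<union> {(Alpha, R) | R. R \<in> \<Pi>}
   \<union> {(Alpha, Rule {} {(c, v1), (c, v2)} FTop) | c v1 v2.
        c \<in> C \<and> v1 \<in> Dom c \<and> v2 \<in> Dom c \<and> v1 \<noteq> v2}
   \<union> {(Alpha, Rule {} {} (FNot (disj_list (map (\<lambda>v. FAtom (c, v)) (dom_list Dom c))))) | c.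
        c \<in> PC}"

definition consistent :: "'c set \<Rightarrow> 'c set \<Rightarrow> ('c \<Rightarrow> 'v set) \<Rightarrow> ('c \<times> 'v) set \<Rightarrow> bool" where
  "consistent C PC Dom I \<longleftrightarrow>
     (\<forall>c \<in> C. \<forall>v1 \<in> Dom c. \<forall>v2 \<in> Dom c. v1 \<noteq> v2 \<longrightarrow> \<not> ((c, v1) \<in> I \<and> (c, v2) \<in> I)) \<and>
     (\<forall>c \<in> PC. \<exists>v \<in> Dom c. (c, v) \<in> I)"

definition TC :: "'c set \<Rightarrow> ('c \<times> 'v) set \<Rightarrow> ('c \<times> 'v) set" where
  "TC PC I = {(c, v) \<in> I. c \<in> PC}"

definition SM2 ::
  "'c set \<Rightarrow> 'c set \<Rightarrow> ('c \<Rightarrow> 'v set) \<Rightarrow> ('c \<times> 'v) rule set \<Rightarrow> ('c \<times> 'v) set set" where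
  "SM2 C PC Dom \<Pi> = {I. I \<subseteq> sig_atoms C Dom \<and> consistent C PC Dom I \<and>
                         stable_model I (\<Pi> \<union> fact ` TC PC I)}"

definition W2 ::
  "'c set \<Rightarrow> 'c set \<Rightarrow> ('c \<Rightarrow> 'v set) \<Rightarrow> ('c \<Rightarrow> 'v \<Rightarrow> real) \<Rightarrow> ('c \<times> 'v) rule set
   \<Rightarrow> ('c \<times> 'v) set \<Rightarrow> real" where
  "W2 C PC Dom M \<Pi> I =
     (if I \<in> SM2 C PC Dom \<Pi> then (\<Prod>(c, v) \<in> TC PC I. M c v) else 0)"

definition P2 ::
  "'c set \<Rightarrow> 'c set \<Rightarrow> ('c \<Rightarrow> 'v set) \<Rightarrow> ('c \<Rightarrow> 'v \<Rightarrow> real) \<Rightarrow> ('c \<times> 'v) rule set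
   \<Rightarrow> ('c \<times> 'v) set \<Rightarrow> real" where
  "P2 C PC Dom M \<Pi> I = W2 C PC Dom M \<Pi> I / (\<Sum>J \<in> SM2 C PC Dom \<Pi>. W2 C PC Dom M \<Pi> J)"

end

theory Submission
  imports Defs
begin

lemma exp_neg_lim:
  fixes c g :: real assumes "c < 0"
  shows "((\<lambda>a. exp (a * c + g)) \<longlongrightarrow> 0) at_top"
proof -
  have "filterlim (\<lambda>a. c * a) at_bot at_top"
    using assms by (intro filterlim_cmult_at_bot_at_top[OF filterlim_ident]) auto
  then have "filterlim (\<lambda>a. g + c * a) at_bot at_top"
    using filterlim_tendsto_add_at_bot_iff[OF tendsto_const] by blast
  then have "filterlim (\<lambda>a. a * c + g) at_bot at_top"
    by (simp add: algebra_simps)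
  then show ?thesis using exp_at_bot filterlim_compose by blast
qed

lemma lim_lemma:
  fixes X :: "'a set" and k :: "'a \<Rightarrow> nat" and g :: "'a \<Rightarrow> real"
  assumes fin: "finite X" and le: "\<forall>J\<in>X. k J \<le> N" and Y: "Y = {J\<in>X. k J = N}" and ne: "Y \<noteq> {}"
  shows "((\<lambda>a. (if I\<in>X then exp(a * real (k I) + g I) else 0) / (\<Sum>J\<in>X. exp(a * real (k J) + g J)))
          \<longlongrightarrow> (if I\<in>Y then exp (g I) else 0) / (\<Sum>J\<in>Y. exp (g J))) at_top"
proof -
  define e where "e a J = exp(a*(real(k J) - real N) + g J)" for a J
  have ex: "exp(a * real (k J) + g J) = exp (a * real N) * e a J" for a J
    unfolding e_def mult_exp_exp by (simp add: algebra_simps)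
  have eq: "(if I\<in>X then exp(a * real (k I) + g I) else 0) / (\<Sum>J\<in>X. exp(a * real (k J) + g J))
      = (if I\<in>X then e a I else 0) / (\<Sum>J\<in>X. e a J)" for a
    unfolding ex sum_distrib_left[symmetric] by simp
  have lim_e: "((\<lambda>a. e a J) \<longlongrightarrow> (if k J = N then exp(g J) else 0)) at_top" if "J \<in> X" for J
  proof (cases "k J = N")
    case True then show ?thesis by (simp add: e_def)
  next
    case False
    with le that have "real (k J) - real N < 0" by force
    then show ?thesis using False unfolding e_def by (simp add: exp_neg_lim)
  qed
  have "((\<lambda>a. \<Sum>J\<in>X. e a J) \<longlongrightarrow> (\<Sum>J\<in>X. if k J = N then exp(g J) else 0)) at_top"
    by (rule tendsto_sum) (use lim_e in auto)
  moreover have "(\<Sum>J\<in>X. if k J = N then exp(g J) else 0) = (\<Sum>J\<in>Y. exp (g J))"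
    using fin by (simp add: Y sum.inter_filter)
  moreover have "(\<Sum>J\<in>Y. exp (g J)) \<noteq> 0"
  proof -
    have "finite Y" using fin Y by simp
    then have "(\<Sum>J\<in>Y. exp (g J)) > 0" using ne by (simp add: sum_pos)
    then show ?thesis by simp
  qed
  moreover have "((\<lambda>a. if I\<in>X then e a I else 0) \<longlongrightarrow> (if I\<in>Y then exp (g I) else 0)) at_top"
    using lim_e[of I] Y by (cases "I \<in> X") auto
  ultimately have "((\<lambda>a. (if I\<in>X then e a I else 0) / (\<Sum>J\<in>X. e a J)) \<longlongrightarrow> (if I\<in>Y then exp (g I) else 0) / (\<Sum>J\<in>Y. exp (g J))) at_top"
    by (intro tendsto_divide) auto
  then show ?thesis unfolding eq .
qed

lemma reduct_Un: "reduct (P \<union> K) I = reduct P I \<union> reduct K I"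
  unfolding reduct_def by blast


lemma pos_model_Un: "pos_model J (Q \<union> Q') \<longleftrightarrow> pos_model J Q \<and> pos_model J Q'"
  unfolding pos_model_def by (simp only: ball_Un)

lemma stable_constraints:
  assumes "\<forall>R\<in>K. head R = {} \<and> rule_sat I R"
  shows "stable_model I (P \<union> K) \<longleftrightarrow> stable_model I P"
proof -
  have "pos_model J (reduct (P \<union> K) I) \<longleftrightarrow> pos_model J (reduct P I)" if "J \<subseteq> I" for J
  proof -
    have "pos_model J (reduct K I)"
      unfolding pos_model_def
    proof (intro ballI impI, clarify)
      fix A B assume AB: "(A, B) \<in> reduct K I" "B \<subseteq> J"
      then obtain R where R: "R \<in> K" "A = head R" "B = pos R" "fsat I (neg R)"
        unfolding reduct_def by blast
      with assms have "head R = {}" "rule_sat I R" by auto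
      then have "\<not> pos R \<subseteq> I" using R(4) unfolding rule_sat_def by auto
      then show False using AB(2) R(3) that by blast
    qed
    then show ?thesis unfolding reduct_Un pos_model_Un by simp
  qed
  then have e1: "pos_model I (reduct (P \<union> K) I) \<longleftrightarrow> pos_model I (reduct P I)" by simp
  from \<open>\<And>J. J \<subseteq> I \<Longrightarrow> _\<close> have e2: "(\<forall>J. J \<subset> I \<longrightarrow> \<not> pos_model J (reduct (P \<union> K) I))
     \<longleftrightarrow> (\<forall>J. J \<subset> I \<longrightarrow> \<not> pos_model J (reduct P I))"
    by (simp add: less_imp_le)
  show ?thesis unfolding stable_model_def e1 e2 ..
qed


lemma stable_sat:
  assumes "stable_model I P" "R \<in> P" shows "rule_sat I R"
  unfolding rule_sat_def
proof
  assume h: "pos R \<subseteq> I \<and> fsat I (neg R)"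
  have m: "(head R, pos R) \<in> reduct P I" unfolding reduct_def using assms(2) h by auto
  have "pos_model I (reduct P I)" using assms(1) unfolding stable_model_def by simp
  then have "case (head R, pos R) of (A, B) \<Rightarrow> B \<subseteq> I \<longrightarrow> A \<inter> I \<noteq> {}"
    unfolding pos_model_def using m by (rule bspec)
  then show "head R \<inter> I \<noteq> {}" using h by simp
qed

lemma rule_sat_fact[simp]: "rule_sat I (fact a) \<longleftrightarrow> a \<in> I"
  unfolding rule_sat_def fact_def by auto


lemma sat_part_Un: "sat_part (X \<union> Y) I = sat_part X I \<union> sat_part Y I"
  unfolding sat_part_def by blast


lemma sat_part_sub: "sat_part X I \<subseteq> X"
  unfolding sat_part_def by blast


lemma fsat_disj_list: "fsat I (disj_list fs) \<longleftrightarrow> (\<exists>f\<in>set fs. fsat I f)"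
  unfolding disj_list_def by (induction fs) auto


lemma dom_list_set: assumes "finite (Dom c)" shows "set (dom_list Dom c) = Dom c"
proof -
  have "\<exists>xs. distinct xs \<and> set xs = Dom c" using finite_distinct_list[OF assms] by blast
  from someI_ex[OF this] show ?thesis unfolding dom_list_def by simp
qed





theorem proposition4:
  fixes C PC :: "'c set" and Dom :: "'c \<Rightarrow> 'v set" and M :: "'c \<Rightarrow> 'v \<Rightarrow> real"
    and \<Pi> :: "('c \<times> 'v) rule set" and I :: "('c \<times> 'v) set"
  assumes "mv_program C PC Dom M \<Pi>"
    and "\<forall>c \<in> PC. \<forall>v \<in> Dom c. 0 < M c v"
    and "SM2 C PC Dom \<Pi> \<noteq> {}"
    and "I \<subseteq> sig_atoms C Dom"
  shows "((\<lambda>\<alpha>. lpmln_ratio (sig_atoms C Dom) (T_prog C PC Dom M \<Pi>) \<alpha> I)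
            \<longlongrightarrow> P2 C PC Dom M \<Pi> I) at_top
       \<and> P2 C PC Dom M \<Pi> I = lpmln_prob (sig_atoms C Dom) (T_prog C PC Dom M \<Pi>) I"
proof -
  have finC: "finite C" and PCC: "PC \<subseteq> C" and finD: "\<forall>c\<in>C. finite (Dom c)"
    and Mb: "\<forall>c\<in>PC. (\<forall>v\<in>Dom c. 0 \<le> M c v \<and> M c v \<le> 1) \<and> (\<Sum>v\<in>Dom c. M c v) = 1"
    and finPi: "finite \<Pi>" using assms(1) unfolding mv_program_def by auto
  have Mpos: "\<forall>c \<in> PC. \<forall>v \<in> Dom c. 0 < M c v" by (rule assms(2))
  define At where "At = sig_atoms C Dom"
  have AtS: "At = Sigma C Dom" unfolding At_def sig_atoms_def by auto
  have finAt: "finite At" unfolding AtS using finC finD by (intro finite_SigmaI) auto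
  define Sft where "Sft = {(W (ln (M c v)), fact (c, v)) | c v. c \<in> PC \<and> v \<in> Dom c \<and> 0 < M c v \<and> M c v < 1}"
  define Hd where "Hd = {(Alpha, fact (c, v)) | c v. c \<in> PC \<and> v \<in> Dom c \<and> M c v = 1}"
  define Z where "Z = {(Alpha, Rule {} {(c, v)} FTop) | c v. c \<in> PC \<and> v \<in> Dom c \<and> M c v = 0}"
  define Pa where "Pa = {(Alpha, R) | R. R \<in> \<Pi>}"
  define Cn where "Cn = {(Alpha, Rule {} {(c, v1), (c, v2)} FTop) | c v1 v2.
        c \<in> C \<and> v1 \<in> Dom c \<and> v2 \<in> Dom c \<and> v1 \<noteq> v2}"
  define Exs where "Exs = {(Alpha, Rule {} {} (FNot (disj_list (map (\<lambda>v. FAtom (c, v)) (dom_list Dom c))))) | c.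
        c \<in> PC}"
  define A where "A = Hd \<union> Pa \<union> Cn \<union> Exs"
  define T where "T = T_prog C PC Dom M \<Pi>"
  have Z: "Z = {}" unfolding Z_def using Mpos by fastforce
  have "T = Sft \<union> Hd \<union> Z \<union> Pa \<union> Cn \<union> Exs"
    unfolding T_def T_prog_def Sft_def Hd_def Z_def Pa_def Cn_def Exs_def by (rule refl)
  then have T: "T = Sft \<union> A" unfolding A_def Z by (simp add: Un_assoc)
  have Aalpha: "\<forall>p\<in>A. fst p = Alpha" unfolding A_def Hd_def Pa_def Cn_def Exs_def by auto
  have SW: "\<forall>p\<in>Sft. fst p \<noteq> Alpha" unfolding Sft_def by auto
  have disj: "Sft \<inter> A = {}" using Aalpha SW by blast
  have Sft_img: "Sft = (\<lambda>(c, v). (W (ln (M c v)), fact (c, v))) ` {(c, v). c \<in> PC \<and> v \<in> Dom c \<and> 0 < M c v \<and> M c v < 1}"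
    unfolding Sft_def by force
  have Hd_img: "Hd = (\<lambda>(c, v). (Alpha, fact (c, v))) ` {(c, v). c \<in> PC \<and> v \<in> Dom c \<and> M c v = 1}"
    unfolding Hd_def by force
  have Pa_img: "Pa = Pair Alpha ` \<Pi>" unfolding Pa_def by blast
  have Cn_sub: "Cn \<subseteq> (\<lambda>(a, b). (Alpha, Rule {} {a, b} FTop)) ` (At \<times> At)"
    unfolding Cn_def AtS using PCC by force
  have Exs_img: "Exs = (\<lambda>c. (Alpha, Rule {} {} (FNot (disj_list (map (\<lambda>v. FAtom (c, v)) (dom_list Dom c)))))) ` PC"
    unfolding Exs_def by blast
  have finPC: "finite PC" using finC PCC finite_subset by blast
  have finSft: "finite Sft" unfolding Sft_img
    by (rule finite_imageI, rule finite_subset[OF _ finAt]) (use PCC in \<open>auto simp: AtS\<close>)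
  have finA: "finite A" unfolding A_def
  proof (intro finite_UnI)
    show "finite Hd" unfolding Hd_img
      by (rule finite_imageI, rule finite_subset[OF _ finAt]) (use PCC in \<open>auto simp: AtS\<close>)
    show "finite Pa" unfolding Pa_img using finPi by simp
    show "finite Cn" using Cn_sub finAt finite_subset by (metis finite_SigmaI finite_imageI)
    show "finite Exs" unfolding Exs_img using finPC by simp
  qed
  have finT: "finite T" unfolding T using finSft finA by simp
  define X where "X = lpmln_SM At T"
  define k where "k J = card (sat_part A J)" for J
  define N where "N = card A"
  define g where "g J = (\<Sum>(w, R) \<in> sat_part Sft J. wval 0 w)" for J
  have sumdec: "(\<Sum>(w, R) \<in> sat_part T J. wval a w) = a * real (k J) + g J" for a J
  proof -
    have sp: "sat_part T J = sat_part Sft J \<union> sat_part A J" unfolding T sat_part_Un ..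
    have f1: "finite (sat_part Sft J)" using finSft sat_part_sub finite_subset by blast
    have f2: "finite (sat_part A J)" using finA sat_part_sub finite_subset by blast
    have d: "sat_part Sft J \<inter> sat_part A J = {}" using disj sat_part_sub by blast
    have "(\<Sum>(w, R) \<in> sat_part A J. wval a w) = (\<Sum>p \<in> sat_part A J. a)"
    proof (rule sum.cong)
      fix p assume "p \<in> sat_part A J"
      then have "fst p = Alpha" using Aalpha sat_part_sub by blast
      then show "(case p of (w, R) \<Rightarrow> wval a w) = a" by (cases p) simp
    qed simp
    also have "\<dots> = a * real (k J)" unfolding k_def by simp
    finally have e1: "(\<Sum>(w, R) \<in> sat_part A J. wval a w) = a * real (k J)" .
    have "(\<Sum>(w, R) \<in> sat_part Sft J. wval a w) = g J" unfolding g_def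
    proof (rule sum.cong)
      fix p assume "p \<in> sat_part Sft J"
      then have "fst p \<noteq> Alpha" using SW sat_part_sub by blast
      then show "(case p of (w, R) \<Rightarrow> wval a w) = (case p of (w, R) \<Rightarrow> wval 0 w)"
        by (cases p, rename_tac w R, case_tac w) auto
    qed simp
    then show ?thesis unfolding sp sum.union_disjoint[OF f1 f2 d] e1 by simp
  qed
  have allsat: "sat_part A J = A \<longleftrightarrow> (\<forall>p\<in>A. rule_sat J (snd p))" for J
    unfolding sat_part_def by auto
  have kN: "k J = N \<longleftrightarrow> sat_part A J = A" for J
    unfolding k_def N_def using finA sat_part_sub by (metis card_subset_eq)
  have kle: "k J \<le> N" for J unfolding k_def N_def using finA sat_part_sub by (metis card_mono)
  have sHd: "(\<forall>p\<in>Hd. rule_sat J (snd p)) \<longleftrightarrow> (\<forall>c\<in>PC. \<forall>v\<in>Dom c. M c v = 1 \<longrightarrow> (c, v) \<in> J)" for J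
  proof
    assume h: "\<forall>p\<in>Hd. rule_sat J (snd p)"
    show "\<forall>c\<in>PC. \<forall>v\<in>Dom c. M c v = 1 \<longrightarrow> (c, v) \<in> J"
    proof (intro ballI impI)
      fix c v assume "c \<in> PC" "v \<in> Dom c" "M c v = 1"
      then have "(Alpha, fact (c, v)) \<in> Hd" unfolding Hd_def by blast
      then have "rule_sat J (fact (c, v))" using h by fastforce
      then show "(c, v) \<in> J" by simp
    qed
  next
    assume h: "\<forall>c\<in>PC. \<forall>v\<in>Dom c. M c v = 1 \<longrightarrow> (c, v) \<in> J"
    show "\<forall>p\<in>Hd. rule_sat J (snd p)"
    proof
      fix p assume "p \<in> Hd"
      then obtain c v where "p = (Alpha, fact (c, v))" "c \<in> PC" "v \<in> Dom c" "M c v = 1"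
        unfolding Hd_def by blast
      then show "rule_sat J (snd p)" using h by simp
    qed
  qed
  have sPa: "(\<forall>p\<in>Pa. rule_sat J (snd p)) \<longleftrightarrow> (\<forall>R\<in>\<Pi>. rule_sat J R)" for J
    unfolding Pa_def by auto
  have rsC: "rule_sat J (Rule {} {a, b} FTop) \<longleftrightarrow> \<not> (a \<in> J \<and> b \<in> J)" for J a b
    by (simp add: rule_sat_def)
  have sCn: "(\<forall>p\<in>Cn. rule_sat J (snd p)) \<longleftrightarrow>
     (\<forall>c \<in> C. \<forall>v1 \<in> Dom c. \<forall>v2 \<in> Dom c. v1 \<noteq> v2 \<longrightarrow> \<not> ((c, v1) \<in> J \<and> (c, v2) \<in> J))" for J
  proof
    assume h: "\<forall>p\<in>Cn. rule_sat J (snd p)"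
    show "\<forall>c \<in> C. \<forall>v1 \<in> Dom c. \<forall>v2 \<in> Dom c. v1 \<noteq> v2 \<longrightarrow> \<not> ((c, v1) \<in> J \<and> (c, v2) \<in> J)"
    proof (intro ballI impI)
      fix c v1 v2 assume "c \<in> C" "v1 \<in> Dom c" "v2 \<in> Dom c" "v1 \<noteq> v2"
      then have m: "(Alpha, Rule {} {(c, v1), (c, v2)} FTop) \<in> Cn" unfolding Cn_def mem_Collect_eq
        by (intro exI[of _ c] exI[of _ v1] exI[of _ v2]) simp
      have "rule_sat J (snd (Alpha, Rule {} {(c, v1), (c, v2)} FTop))" using h m by (rule bspec)
      then have "rule_sat J (Rule {} {(c, v1), (c, v2)} FTop)" by (simp only: snd_conv)
      then show "\<not> ((c, v1) \<in> J \<and> (c, v2) \<in> J)" using rsC[of J "(c, v1)" "(c, v2)"] by blast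
    qed
  next
    assume h: "\<forall>c \<in> C. \<forall>v1 \<in> Dom c. \<forall>v2 \<in> Dom c. v1 \<noteq> v2 \<longrightarrow> \<not> ((c, v1) \<in> J \<and> (c, v2) \<in> J)"
    show "\<forall>p\<in>Cn. rule_sat J (snd p)"
    proof
      fix p assume "p \<in> Cn"
      then obtain c v1 v2 where p: "p = (Alpha, Rule {} {(c, v1), (c, v2)} FTop)" and "c \<in> C" "v1 \<in> Dom c" "v2 \<in> Dom c" "v1 \<noteq> v2"
        unfolding Cn_def by blast
      then have "\<not> ((c, v1) \<in> J \<and> (c, v2) \<in> J)" using h by blast
      then show "rule_sat J (snd p)" unfolding p snd_conv rsC .
    qed
  qed
  have ex1: "rule_sat J (Rule {} {} (FNot (disj_list (map (\<lambda>v. FAtom (c, v)) (dom_list Dom c)))))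
       \<longleftrightarrow> (\<exists>v \<in> Dom c. (c, v) \<in> J)" if "c \<in> PC" for c J
  proof -
    have sd: "set (dom_list Dom c) = Dom c" using that PCC finD by (intro dom_list_set) blast
    have "rule_sat J (Rule {} {} (FNot (disj_list (map (\<lambda>v. FAtom (c, v)) (dom_list Dom c)))))
       \<longleftrightarrow> fsat J (disj_list (map (\<lambda>v. FAtom (c, v)) (dom_list Dom c)))"
      by (simp add: rule_sat_def)
    also have "\<dots> \<longleftrightarrow> (\<exists>v \<in> set (dom_list Dom c). (c, v) \<in> J)"
      unfolding fsat_disj_list by simp
    finally show ?thesis unfolding sd .
  qed
  have sEx: "(\<forall>p\<in>Exs. rule_sat J (snd p)) \<longleftrightarrow> (\<forall>c \<in> PC. \<exists>v \<in> Dom c. (c, v) \<in> J)" for J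
  proof
    assume h: "\<forall>p\<in>Exs. rule_sat J (snd p)"
    show "\<forall>c \<in> PC. \<exists>v \<in> Dom c. (c, v) \<in> J"
    proof
      fix c assume c: "c \<in> PC"
      then have m: "(Alpha, Rule {} {} (FNot (disj_list (map (\<lambda>v. FAtom (c, v)) (dom_list Dom c))))) \<in> Exs"
        unfolding Exs_img by (rule imageI)
      have "rule_sat J (snd (Alpha, Rule {} {} (FNot (disj_list (map (\<lambda>v. FAtom (c, v)) (dom_list Dom c))))))"
        using h m by (rule bspec)
      then have "rule_sat J (Rule {} {} (FNot (disj_list (map (\<lambda>v. FAtom (c, v)) (dom_list Dom c)))))"
        by (simp only: snd_conv)
      then show "\<exists>v \<in> Dom c. (c, v) \<in> J" using ex1[OF c] by blast
    qed
  next
    assume h: "\<forall>c \<in> PC. \<exists>v \<in> Dom c. (c, v) \<in> J"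
    show "\<forall>p\<in>Exs. rule_sat J (snd p)"
    proof
      fix p assume "p \<in> Exs"
      then obtain c where p: "p = (Alpha, Rule {} {} (FNot (disj_list (map (\<lambda>v. FAtom (c, v)) (dom_list Dom c)))))"
        and c: "c \<in> PC" unfolding Exs_def by blast
      show "rule_sat J (snd p)" unfolding p snd_conv ex1[OF c] using h c by blast
    qed
  qed
  have allsat2: "sat_part A J = A \<longleftrightarrow> (\<forall>R\<in>\<Pi>. rule_sat J R) \<and>
      (\<forall>c\<in>PC. \<forall>v\<in>Dom c. M c v = 1 \<longrightarrow> (c, v) \<in> J) \<and> consistent C PC Dom J" for J
    unfolding allsat[of J] unfolding A_def ball_Un sHd sPa sCn sEx consistent_def by argo
  have spdef: "sat_part X' J = {p\<in>X'. rule_sat J (snd p)}" for X' :: "(weight \<times> ('c \<times> 'v) rule) set" and J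
    unfolding sat_part_def by auto
  have hard: "(c, v) \<in> J" if cons: "consistent C PC Dom J" and c: "c \<in> PC" and v: "v \<in> Dom c"
    and M1: "M c v = 1" for J c v
  proof -
    obtain v' where v': "v' \<in> Dom c" "(c, v') \<in> J" using cons c unfolding consistent_def by blast
    show ?thesis
    proof (cases "v' = v")
      case True then show ?thesis using v' by simp
    next
      case False
      have fD: "finite (Dom c)" using c PCC finD by blast
      have "(\<Sum>x\<in>{v, v'}. M c x) \<le> (\<Sum>x\<in>Dom c. M c x)"
        by (rule sum_mono2[OF fD]) (use v v' Mb c in auto)
      moreover have "(\<Sum>x\<in>{v, v'}. M c x) = M c v + M c v'" using False by simp
      moreover have "M c v' > 0" using Mpos c v' by blast
      ultimately show ?thesis using Mb c M1 by simp
    qed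
  qed
  have facts: "snd ` sat_part Sft J \<union> snd ` Hd = fact ` TC PC J"
    if JA: "J \<subseteq> At" and hb: "\<forall>c\<in>PC. \<forall>v\<in>Dom c. M c v = 1 \<longrightarrow> (c, v) \<in> J" for J
  proof (rule set_eqI, rule iffI)
    fix R assume "R \<in> snd ` sat_part Sft J \<union> snd ` Hd"
    then consider "R \<in> snd ` sat_part Sft J" | "R \<in> snd ` Hd" by blast
    then show "R \<in> fact ` TC PC J"
    proof cases
      case 1
      then obtain p where p: "p \<in> Sft" "rule_sat J (snd p)" "R = snd p" unfolding spdef by blast
      then obtain c v where "p = (W (ln (M c v)), fact (c, v))" "c \<in> PC" unfolding Sft_def by blast
      then show ?thesis using p unfolding TC_def by auto
    next
      case 2
      then obtain c v where "R = fact (c, v)" "c \<in> PC" "v \<in> Dom c" "M c v = 1" unfolding Hd_def by auto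
      then show ?thesis using hb unfolding TC_def by auto
    qed
  next
    fix R assume "R \<in> fact ` TC PC J"
    then obtain c v where R: "R = fact (c, v)" "(c, v) \<in> J" "c \<in> PC" unfolding TC_def by auto
    then have v: "v \<in> Dom c" using JA unfolding AtS by auto
    have M: "0 < M c v" "M c v \<le> 1" using Mpos Mb R(3) v by auto
    show "R \<in> snd ` sat_part Sft J \<union> snd ` Hd"
    proof (cases "M c v = 1")
      case True
      then have "(Alpha, fact (c, v)) \<in> Hd" unfolding Hd_def using R v by blast
      then show ?thesis using R by force
    next
      case False
      then have "M c v < 1" using M by simp
      then have "(W (ln (M c v)), fact (c, v)) \<in> Sft" unfolding Sft_def mem_Collect_eq using R v M
        by (intro exI[of _ c] exI[of _ v]) simp
      then have "(W (ln (M c v)), fact (c, v)) \<in> sat_part Sft J" unfolding spdef using R by simp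
      then show ?thesis using R by force
    qed
  qed
  have spT: "snd ` sat_part T J = (\<Pi> \<union> fact ` TC PC J) \<union> (snd ` Cn \<union> snd ` Exs)"
    if JA: "J \<subseteq> At" and all: "sat_part A J = A" for J
  proof -
    have hb: "\<forall>c\<in>PC. \<forall>v\<in>Dom c. M c v = 1 \<longrightarrow> (c, v) \<in> J" using all allsat2 by blast
    have "snd ` sat_part T J = snd ` sat_part Sft J \<union> snd ` Hd \<union> snd ` Pa \<union> snd ` Cn \<union> snd ` Exs"
      unfolding T sat_part_Un all unfolding A_def image_Un by (simp add: Un_assoc)
    also have "snd ` Pa = \<Pi>" unfolding Pa_img image_image by simp
    finally show ?thesis unfolding facts[OF JA hb] by blast
  qed
  have Kc: "\<forall>R \<in> snd ` Cn \<union> snd ` Exs. head R = {} \<and> rule_sat J R" if all: "sat_part A J = A" for J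
  proof
    fix R assume R: "R \<in> snd ` Cn \<union> snd ` Exs"
    then obtain p where p: "p \<in> Cn \<union> Exs" "R = snd p" by blast
    then have "p \<in> A" unfolding A_def by blast
    then have "rule_sat J R" using all p(2) unfolding allsat by blast
    moreover have "head R = {}" using p unfolding Cn_def Exs_def by auto
    ultimately show "head R = {} \<and> rule_sat J R" by blast
  qed
  have steq: "stable_model J (snd ` sat_part T J) \<longleftrightarrow> stable_model J (\<Pi> \<union> fact ` TC PC J)"
    if JA: "J \<subseteq> At" and all: "sat_part A J = A" for J
    unfolding spT[OF JA all] by (rule stable_constraints[OF Kc[OF all]])
  have SMc: "J \<in> SM2 C PC Dom \<Pi> \<longleftrightarrow> J \<in> X \<and> k J = N" for J
  proof
    assume J: "J \<in> SM2 C PC Dom \<Pi>"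
    then have JA: "J \<subseteq> At" and cons: "consistent C PC Dom J" and st: "stable_model J (\<Pi> \<union> fact ` TC PC J)"
      unfolding SM2_def At_def by auto
    have a: "\<forall>R\<in>\<Pi>. rule_sat J R" using st stable_sat by blast
    have b: "\<forall>c\<in>PC. \<forall>v\<in>Dom c. M c v = 1 \<longrightarrow> (c, v) \<in> J" using hard[OF cons] by blast
    have all: "sat_part A J = A" using allsat2 a b cons by blast
    then show "J \<in> X \<and> k J = N" unfolding X_def lpmln_SM_def kN using JA st steq[OF JA all] by simp
  next
    assume "J \<in> X \<and> k J = N"
    then have JA: "J \<subseteq> At" and st: "stable_model J (snd ` sat_part T J)" and all: "sat_part A J = A"
      unfolding X_def lpmln_SM_def kN by auto
    have cons: "consistent C PC Dom J" using all allsat2 by blast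
    show "J \<in> SM2 C PC Dom \<Pi>" unfolding SM2_def using JA cons st steq[OF JA all] At_def by simp
  qed
  have wt: "(\<Prod>(c, v) \<in> TC PC J. M c v) = exp (g J)" if JA: "J \<subseteq> At" for J
  proof -
    define h where "h = (\<lambda>(c, v). (W (ln (M c v)), fact (c, v)))"
    define Ds where "Ds = {(c, v). c \<in> PC \<and> v \<in> Dom c \<and> 0 < M c v \<and> M c v < 1}"
    define D where "D = {x \<in> Ds. x \<in> J}"
    have inj: "inj_on h D" unfolding inj_on_def h_def fact_def by auto
    have sp: "sat_part Sft J = h ` D"
    proof -
      have "sat_part Sft J = {p \<in> h ` Ds. rule_sat J (snd p)}" unfolding spdef Sft_img h_def Ds_def ..
      also have "\<dots> = h ` D" unfolding D_def h_def by auto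
      finally show ?thesis .
    qed
    have finJ: "finite J" using JA finAt finite_subset by blast
    have finD: "finite D" unfolding D_def using finJ by simp
    have "g J = (\<Sum>x\<in>D. (case h x of (w, R) \<Rightarrow> wval 0 w))"
      unfolding g_def sp sum.reindex[OF inj] comp_def ..
    also have "\<dots> = (\<Sum>x\<in>D. ln ((\<lambda>(c, v). M c v) x))"
      by (rule sum.cong) (auto simp: h_def)
    finally have gJ: "exp (g J) = (\<Prod>x\<in>D. exp (ln ((\<lambda>(c, v). M c v) x)))"
      by (simp add: exp_sum[OF finD])
    also have "\<dots> = (\<Prod>x\<in>D. (\<lambda>(c, v). M c v) x)"
      by (rule prod.cong) (auto simp: D_def Ds_def)
    finally have e1: "exp (g J) = (\<Prod>x\<in>D. (\<lambda>(c, v). M c v) x)" .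
    have finTC: "finite (TC PC J)" using finJ unfolding TC_def by (rule finite_subset[rotated]) auto
    have DT: "D \<subseteq> TC PC J" unfolding D_def Ds_def TC_def by auto
    have one: "\<forall>x\<in>TC PC J - D. (\<lambda>(c, v). M c v) x = 1"
    proof
      fix x assume x: "x \<in> TC PC J - D"
      obtain c v where xcv: "x = (c, v)" by (cases x)
      have c: "c \<in> PC" "(c, v) \<in> J" using x xcv unfolding TC_def by auto
      then have v: "v \<in> Dom c" using JA unfolding AtS by auto
      have "0 < M c v" "M c v \<le> 1" using Mpos Mb c v by auto
      moreover have "\<not> (0 < M c v \<and> M c v < 1)" using x xcv c v unfolding D_def Ds_def by auto
      ultimately show "(\<lambda>(c, v). M c v) x = 1" using xcv by simp
    qed
    have "(\<Prod>x\<in>TC PC J. (\<lambda>(c, v). M c v) x) = (\<Prod>x\<in>D. (\<lambda>(c, v). M c v) x)"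
      by (rule prod.mono_neutral_right[OF finTC DT one])
    then show ?thesis unfolding e1 by simp
  qed
  have finX: "finite X"
  proof (rule finite_subset[of X "Pow At"])
    show "X \<subseteq> Pow At" unfolding X_def lpmln_SM_def by auto
  qed (use finAt in simp)
  have Y: "SM2 C PC Dom \<Pi> = {J\<in>X. k J = N}" using SMc by blast
  have lim: "((\<lambda>a. (if I\<in>X then exp(a * real (k I) + g I) else 0) / (\<Sum>J\<in>X. exp(a * real (k J) + g J)))
          \<longlongrightarrow> (if I\<in>SM2 C PC Dom \<Pi> then exp (g I) else 0) / (\<Sum>J\<in>SM2 C PC Dom \<Pi>. exp (g J))) at_top"
    by (rule lim_lemma[OF finX _ Y assms(3)]) (use kle in simp)
  have ratio: "lpmln_ratio At T a I = (if I\<in>X then exp(a * real (k I) + g I) else 0) / (\<Sum>J\<in>X. exp(a * real (k J) + g J))" for a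
  proof -
    have "(\<Sum>J\<in>X. lpmln_W At T a J) = (\<Sum>J\<in>X. exp(a * real (k J) + g J))"
      by (rule sum.cong) (auto simp: lpmln_W_def X_def sumdec)
    then show ?thesis unfolding lpmln_ratio_def X_def[symmetric] by (simp add: lpmln_W_def X_def sumdec)
  qed
  have SMA: "J \<subseteq> At" if "J \<in> SM2 C PC Dom \<Pi>" for J using that unfolding SM2_def At_def by auto
  have p2: "P2 C PC Dom M \<Pi> I = (if I\<in>SM2 C PC Dom \<Pi> then exp (g I) else 0) / (\<Sum>J\<in>SM2 C PC Dom \<Pi>. exp (g J))"
  proof -
    have "(\<Sum>J\<in>SM2 C PC Dom \<Pi>. W2 C PC Dom M \<Pi> J) = (\<Sum>J\<in>SM2 C PC Dom \<Pi>. exp (g J))"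
      by (rule sum.cong) (auto simp: W2_def wt SMA)
    then show ?thesis unfolding P2_def by (simp add: W2_def wt SMA)
  qed
  have L: "((\<lambda>a. lpmln_ratio (sig_atoms C Dom) (T_prog C PC Dom M \<Pi>) a I) \<longlongrightarrow> P2 C PC Dom M \<Pi> I) at_top"
    using lim unfolding ratio[symmetric] p2[symmetric] At_def T_def .
  moreover have "P2 C PC Dom M \<Pi> I = lpmln_prob (sig_atoms C Dom) (T_prog C PC Dom M \<Pi>) I"
    unfolding lpmln_prob_def by (rule tendsto_Lim[OF _ L, symmetric]) simp
  ultimately show ?thesis by blast
qed

end
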